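(* Let $\mathcal{H}$ and $\mathcal{K}$ be finite-dimensional complex Hilbert spaces and let $\mathcal{E}$ be a quantum channel (completely positive trace-preserving linear map) from operators on $\mathcal{H}$ to operators on $\mathcal{K}$, with adjoint $\mathcal{E}^\dagger$. Let $A(0)=\sum_i a_i(0)\,\Pi_i(0)$ be a Hermitian operator on $\mathcal{H}$ and $B(t)=\sum_f b_f(t)\,\Xi_f(t)$ a Hermitian operator on $\mathcal{K}$, written in their spectral decompositions (so $\{\Pi_i(0)\}_i$ and $\{\Xi_f(t)\}_f$ are families of mutually orthogonal projectors summing to the identity). Suppose that $[\Pi_i(0),\mathcal{E}^\dagger(\Xi_f(t))]\neq 0$ for some pair $(i,f)$. Then there exists no family of functions $\rho\mapsto p_{if}(\rho)$, defined on all density operators $\rho$ on $\mathcal{H}$ and taking values in $[0,\infty)$ (i.e. each $(p_{if}(\rho))_{i,f}$ is a probability distribution), satisfying both: (a) correct marginals: for all $\rho$, $\sum_f p_{if}(\rho)=\mathrm{Tr}(\Pi_i(0)\rho)$ for every $i$ and $\sum_i p_{if}(\rho)=\mathrm{Tr}(\Xi_f(t)\mathcal{E}(\rho))$ for every $f$; (b) convex-linearity: whenever $\rho=\sum_k p_k\rho_k$ is a convex combination of density operators, $p_{if}(\rho)=\sum_k p_k\, p_{if}(\rho_k)$ for all $i,f$.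
   Context: The adjoint $\mathcal{E}^\dagger$ of a channel $\mathcal{E}$ is the linear map defined by $\mathrm{Tr}(X\,\mathcal{E}(Y))=\mathrm{Tr}(\mathcal{E}^\dagger(X)\,Y)$ for all operators $X$ on $\mathcal{K}$ and $Y$ on $\mathcal{H}$; if $\mathcal{E}(\rho)=\sum_k K_k\rho K_k^\dagger$ then $\mathcal{E}^\dagger(X)=\sum_k K_k^\dagger X K_k$. *)

theory Defs
  imports Complex_Main "Jordan_Normal_Form.Matrix"
begin

(* Operators on an n-dimensional Hilbert space = n x n complex matrices (JNF type complex mat). *)

definition tr :: "complex mat \<Rightarrow> complex" where
  "tr M = (\<Sum>i<dim_row M. M $$ (i,i))"

definition adj :: "complex mat \<Rightarrow> complex mat" where
  "adj M = mat (dim_col M) (dim_row M) (\<lambda>(i,j). cnj (M $$ (j,i)))"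

definition hermitian :: "nat \<Rightarrow> complex mat \<Rightarrow> bool" where
  "hermitian n M \<longleftrightarrow> M \<in> carrier_mat n n \<and> adj M = M"

definition psd :: "nat \<Rightarrow> complex mat \<Rightarrow> bool" where
  "psd n M \<longleftrightarrow> hermitian n M \<and>
     (\<forall>v \<in> carrier_vec n. 0 \<le> Re (conjugate v \<bullet> (M *\<^sub>v v)))"

definition density :: "nat \<Rightarrow> complex mat \<Rightarrow> bool" where
  "density n \<rho> \<longleftrightarrow> psd n \<rho> \<and> tr \<rho> = 1"

definition msum :: "nat \<Rightarrow> ('i \<Rightarrow> complex mat) \<Rightarrow> 'i set \<Rightarrow> complex mat" where
  "msum n f S = mat n n (\<lambda>(r,c). \<Sum>i\<in>S. f i $$ (r,c))"

definition projector :: "nat \<Rightarrow> complex mat \<Rightarrow> bool" where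
  "projector n P \<longleftrightarrow> hermitian n P \<and> P * P = P"

definition spectral_decomp ::
    "nat \<Rightarrow> complex mat \<Rightarrow> 'i set \<Rightarrow> ('i \<Rightarrow> real) \<Rightarrow> ('i \<Rightarrow> complex mat) \<Rightarrow> bool" where
  "spectral_decomp n M I a P \<longleftrightarrow>
     finite I \<and> hermitian n M \<and>
     (\<forall>i\<in>I. projector n (P i) \<and> P i \<noteq> 0\<^sub>m n n) \<and>
     (\<forall>i\<in>I. \<forall>j\<in>I. i \<noteq> j \<longrightarrow> P i * P j = 0\<^sub>m n n \<and> a i \<noteq> a j) \<and>
     msum n P I = 1\<^sub>m n \<and>
     M = msum n (\<lambda>i. complex_of_real (a i) \<cdot>\<^sub>m P i) I"

definition lin_map :: "nat \<Rightarrow> nat \<Rightarrow> (complex mat \<Rightarrow> complex mat) \<Rightarrow> bool" where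
  "lin_map n m E \<longleftrightarrow>
     (\<forall>X \<in> carrier_mat n n. E X \<in> carrier_mat m m) \<and>
     (\<forall>X \<in> carrier_mat n n. \<forall>Y \<in> carrier_mat n n. E (X + Y) = E X + E Y) \<and>
     (\<forall>c. \<forall>X \<in> carrier_mat n n. E (c \<cdot>\<^sub>m X) = c \<cdot>\<^sub>m E X)"

(* (E \<otimes> id_k) applied to a (k*n) x (k*n) matrix viewed as a k x k array of n x n blocks
   (block (a,b) occupies rows a*n..a*n+n-1, columns b*n..b*n+n-1) *)
definition ampl :: "(complex mat \<Rightarrow> complex mat) \<Rightarrow> nat \<Rightarrow> nat \<Rightarrow> nat \<Rightarrow> complex mat \<Rightarrow> complex mat" where
  "ampl E n m k X = mat (k*m) (k*m) (\<lambda>(r,c).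
      E (mat n n (\<lambda>(u,v). X $$ ((r div m)*n + u, (c div m)*n + v))) $$ (r mod m, c mod m))"

definition completely_positive :: "nat \<Rightarrow> nat \<Rightarrow> (complex mat \<Rightarrow> complex mat) \<Rightarrow> bool" where
  "completely_positive n m E \<longleftrightarrow>
     (\<forall>k X. psd (k*n) X \<longrightarrow> psd (k*m) (ampl E n m k X))"

definition trace_preserving :: "nat \<Rightarrow> (complex mat \<Rightarrow> complex mat) \<Rightarrow> bool" where
  "trace_preserving n E \<longleftrightarrow> (\<forall>X \<in> carrier_mat n n. tr (E X) = tr X)"

definition quantum_channel :: "nat \<Rightarrow> nat \<Rightarrow> (complex mat \<Rightarrow> complex mat) \<Rightarrow> bool" where
  "quantum_channel n m E \<longleftrightarrow> lin_map n m E \<and> completely_positive n m E \<and> trace_preserving n E"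

definition is_adjoint :: "nat \<Rightarrow> nat \<Rightarrow> (complex mat \<Rightarrow> complex mat) \<Rightarrow> (complex mat \<Rightarrow> complex mat) \<Rightarrow> bool" where
  "is_adjoint n m E Ed \<longleftrightarrow>
     (\<forall>X \<in> carrier_mat m m. Ed X \<in> carrier_mat n n) \<and>
     (\<forall>X \<in> carrier_mat m m. \<forall>Y \<in> carrier_mat n n. tr (X * E Y) = tr (Ed X * Y))"

end

theory Submission
  imports Defs
begin


definition Dm :: "nat \<Rightarrow> complex vec \<Rightarrow> complex vec \<Rightarrow> real \<Rightarrow> complex \<Rightarrow> complex mat" where
 "Dm n u w a c = mat n n (\<lambda>(r,s). of_real a * (u$r * cnj (u$s)) + of_real (1-a) * (w$r * cnj (w$s))
     + c * (u$r * cnj (w$s)) + cnj c * (w$r * cnj (u$s)))"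

definition ON :: "nat \<Rightarrow> complex vec \<Rightarrow> complex vec \<Rightarrow> bool" where
 "ON n u w \<longleftrightarrow> u \<in> carrier_vec n \<and> w \<in> carrier_vec n \<and> (\<Sum>r<n. u$r * cnj(u$r)) = 1 \<and>
    (\<Sum>r<n. w$r * cnj(w$r)) = 1 \<and> (\<Sum>r<n. u$r * cnj(w$r)) = 0"

definition bil :: "nat \<Rightarrow> complex mat \<Rightarrow> complex vec \<Rightarrow> complex vec \<Rightarrow> complex" where
 "bil n M x y = (\<Sum>r<n. \<Sum>s<n. cnj (x$r) * M$$(r,s) * y$s)"

lemma Dm_carrier[simp]: "Dm n u w a c \<in> carrier_mat n n" by (simp add: Dm_def)
lemma Dm_dims[simp]: "dim_row (Dm n u w a c) = n" "dim_col (Dm n u w a c) = n" by (simp_all add: Dm_def)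

lemma tr_Dm:
  assumes M: "M \<in> carrier_mat n n"
  shows "tr (M * Dm n u w a c) = of_real a * bil n M u u + of_real(1-a) * bil n M w w
     + c * bil n M w u + cnj c * bil n M u w"
proof -
  have "tr (M * Dm n u w a c) = (\<Sum>r<n. \<Sum>s<n. M$$(r,s) * Dm n u w a c $$ (s,r))"
    using M unfolding tr_def by (auto simp: scalar_prod_def lessThan_atLeast0 intro!: sum.cong)
  also have "\<dots> = of_real a * bil n M u u + of_real(1-a) * bil n M w w
     + c * bil n M w u + cnj c * bil n M u w"
    by (simp add: Dm_def bil_def sum.distrib sum_subtractf sum_distrib_left algebra_simps)
  finally show ?thesis .
qed

lemma bil_mv:
  assumes "M \<in> carrier_mat n n" "y \<in> carrier_vec n"
  shows "bil n M x y = (\<Sum>r<n. cnj(x$r) * (M *\<^sub>v y)$r)"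
  using assms by (simp add: bil_def scalar_prod_def lessThan_atLeast0 sum_distrib_left algebra_simps)

lemma bil_zero:
  assumes "M \<in> carrier_mat n n" "y \<in> carrier_vec n" "M *\<^sub>v y = 0\<^sub>v n"
  shows "bil n M x y = 0"
  using assms by (simp add: bil_mv)

definition indisk :: "real \<Rightarrow> complex \<Rightarrow> bool" where
  "indisk a c \<longleftrightarrow> 0 \<le> a \<and> a \<le> 1 \<and> (cmod c)^2 \<le> a*(1-a)"

lemma herm_Dm: "adj (Dm n u w a c) = Dm n u w a c"
  by (rule eq_matI) (auto simp: adj_def Dm_def algebra_simps)

lemma prod_exp: "(\<Sum>r<n. cnj (v$r) * x$r) * cnj (\<Sum>r<n. cnj (v$r) * y$r)
   = (\<Sum>r<n. \<Sum>s<n. cnj (v$r) * (x$r * cnj (y$s)) * v$s)"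
  by (simp only: cnj_sum sum_product) (simp add: algebra_simps)

lemma bil_Dm: "bil n (Dm n u w a c) v v =
   (let al = (\<Sum>r<n. cnj (v$r) * u$r); be = (\<Sum>r<n. cnj (v$r) * w$r) in
    of_real a * (al * cnj al) + of_real (1-a) * (be * cnj be) + c * (al * cnj be) + cnj c * (be * cnj al))"
  unfolding Let_def prod_exp
  by (simp add: Dm_def bil_def sum.distrib sum_subtractf sum_distrib_left algebra_simps)

lemma quad_ineq:
  fixes a x y k :: real
  assumes "0 \<le> a" "a \<le> 1" "k^2 \<le> a*(1-a)" "0 \<le> x" "0 \<le> y" "0 \<le> k"
  shows "2*k*x*y \<le> a*x^2 + (1-a)*y^2"
proof -
  have k: "k \<le> sqrt a * sqrt (1-a)" using assms by (simp add: real_le_rsqrt real_sqrt_mult[symmetric])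
  have "2*k*x*y \<le> 2*(sqrt a * sqrt (1-a))*x*y" using k assms by (intro mult_right_mono) auto
  also have "\<dots> \<le> a*x^2 + (1-a)*y^2"
  proof -
    have "0 \<le> (sqrt a * x - sqrt (1-a) * y)^2" by simp
    also have "\<dots> = (sqrt a)^2*x^2 + (sqrt (1-a))^2*y^2 - 2*(sqrt a * sqrt (1-a))*x*y"
      by (simp add: power2_eq_square algebra_simps)
    also have "\<dots> = a*x^2 + (1-a)*y^2 - 2*(sqrt a * sqrt (1-a))*x*y" using assms by simp
    finally show ?thesis by simp
  qed
  finally show ?thesis .
qed

lemma Re_quad:
  assumes "indisk a c"
  shows "0 \<le> Re (of_real a * (al * cnj al) + of_real (1-a) * (be * cnj be) + c * (al * cnj be) + cnj c * (be * cnj al))"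
proof -
  have e: "of_real a * (al * cnj al) + of_real (1-a) * (be * cnj be) + c * (al * cnj be) + cnj c * (be * cnj al)
     = of_real (a * (cmod al)^2 + (1-a) * (cmod be)^2) + (c * (al * cnj be) + cnj (c * (al * cnj be)))"
  proof -
    have n1: "al * cnj al = of_real ((cmod al)^2)" using complex_norm_square[of al] by simp
    have n2: "be * cnj be = of_real ((cmod be)^2)" using complex_norm_square[of be] by simp
    show ?thesis unfolding n1 n2 by (simp only: of_real_add of_real_mult) (simp add: algebra_simps)
  qed
  have r: "\<And>X z. Re (complex_of_real X + (z + cnj z)) = X + 2 * Re z" by simp
  have "- Re (c * (al * cnj be)) \<le> cmod (c * (al * cnj be))"
    by (metis abs_Re_le_cmod abs_le_D2)
  also have "\<dots> = cmod c * cmod al * cmod be" by (simp add: norm_mult)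
  finally have A: "- Re (c * (al * cnj be)) \<le> cmod c * cmod al * cmod be" .
  have "2*cmod c*cmod al*cmod be \<le> a*(cmod al)^2 + (1-a)*(cmod be)^2"
    using assms by (intro quad_ineq) (auto simp: indisk_def)
  with A show ?thesis unfolding e r by linarith
qed

lemma density_Dm:
  assumes on: "ON n u w" and dk: "indisk a c"
  shows "density n (Dm n u w a c)"
proof -
  have H: "hermitian n (Dm n u w a c)" by (simp add: hermitian_def herm_Dm)
  have P: "0 \<le> Re (conjugate v \<bullet> (Dm n u w a c *\<^sub>v v))" if v: "v \<in> carrier_vec n" for v
  proof -
    have "conjugate v \<bullet> (Dm n u w a c *\<^sub>v v) = (\<Sum>r<n. cnj (v$r) * (Dm n u w a c *\<^sub>v v)$r)"
      using v by (simp add: scalar_prod_def lessThan_atLeast0)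
    also have "\<dots> = bil n (Dm n u w a c) v v" using v by (simp add: bil_mv)
    finally have eq: "conjugate v \<bullet> (Dm n u w a c *\<^sub>v v) = bil n (Dm n u w a c) v v" .
    show ?thesis unfolding eq bil_Dm Let_def by (rule Re_quad[OF dk])
  qed
  have w0: "(\<Sum>r<n. w$r * cnj(u$r)) = 0"
  proof -
    have h: "(\<Sum>r<n. w$r * cnj(u$r)) = cnj (\<Sum>r<n. u$r * cnj(w$r))" by (simp add: cnj_sum mult.commute)
    have h2: "(\<Sum>r<n. u$r * cnj(w$r)) = 0" using on by (simp add: ON_def)
    show ?thesis unfolding h h2 by simp
  qed
  have T: "tr (Dm n u w a c) = 1"
  proof -
    have "tr (Dm n u w a c) = of_real a * (\<Sum>r<n. u$r * cnj(u$r)) + of_real (1-a) * (\<Sum>r<n. w$r * cnj(w$r))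
       + c * (\<Sum>r<n. u$r * cnj(w$r)) + cnj c * (\<Sum>r<n. w$r * cnj(u$r))"
      by (simp add: tr_def Dm_def sum.distrib sum_distrib_left)
    also have "\<dots> = 1" using on w0 by (simp add: ON_def)
    finally show ?thesis .
  qed
  show ?thesis using H P T by (simp add: density_def psd_def)
qed

lemma msum_Dm:
  "msum n (\<lambda>k::nat. complex_of_real ((\<lambda>k. if k = 0 then l else 1-l) k) \<cdot>\<^sub>m (\<lambda>k. if k = 0 then Dm n u w a1 c1 else Dm n u w a2 c2) k) {..<2}
    = Dm n u w (l*a1+(1-l)*a2) (of_real l * c1 + of_real (1-l) * c2)"
  by (rule eq_matI) (auto simp: msum_def Dm_def numeral_2_eq_2 algebra_simps)



lemma herm_entry:
  assumes "hermitian n P" "r < n" "s < n"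
  shows "P $$ (r,s) = cnj (P $$ (s,r))"
proof -
  have c: "P \<in> carrier_mat n n" and a: "adj P = P" using assms by (auto simp: hermitian_def)
  have "adj P $$ (r,s) = cnj (P $$ (s,r))" using c assms by (simp add: adj_def)
  then show ?thesis using a by simp
qed

lemma herm_move:
  assumes H: "hermitian n P" and y: "y \<in> carrier_vec n" and z: "z \<in> carrier_vec n"
  shows "(\<Sum>r<n. (P *\<^sub>v y)$r * cnj (z$r)) = (\<Sum>r<n. y$r * cnj ((P *\<^sub>v z)$r))"
proof -
  have c: "P \<in> carrier_mat n n" using H by (simp add: hermitian_def)
  have "(\<Sum>r<n. (P *\<^sub>v y)$r * cnj (z$r)) = (\<Sum>r<n. \<Sum>s<n. P$$(r,s) * y$s * cnj (z$r))"
    using c y by (simp add: scalar_prod_def lessThan_atLeast0 sum_distrib_right)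
  also have "\<dots> = (\<Sum>s<n. \<Sum>r<n. P$$(r,s) * y$s * cnj (z$r))" by (rule sum.swap)
  also have "\<dots> = (\<Sum>s<n. \<Sum>r<n. y$s * cnj (P$$(s,r) * z$r))"
  proof (intro sum.cong refl)
    fix s r assume "s \<in> {..<n}" "r \<in> {..<n}"
    then have "P$$(r,s) = cnj (P$$(s,r))" by (intro herm_entry[OF H]) auto
    then show "P$$(r,s) * y$s * cnj (z$r) = y$s * cnj (P$$(s,r) * z$r)" by simp
  qed
  also have "\<dots> = (\<Sum>r<n. y$r * cnj ((P *\<^sub>v z)$r))"
    using c z by (simp add: scalar_prod_def lessThan_atLeast0 sum_distrib_left cnj_sum)
  finally show ?thesis .
qed

lemma row_herm:
  assumes H: "hermitian n P" and r: "r < n"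
  shows "row P r = conjugate (col P r)"
proof -
  have c: "P \<in> carrier_mat n n" using H by (simp add: hermitian_def)
  show ?thesis
  proof (rule eq_vecI)
    fix i assume "i < dim_vec (conjugate (col P r))"
    then have i: "i < n" using c by simp
    have "P$$(r,i) = cnj (P$$(i,r))" using herm_entry[OF H r i] .
    then show "row P r $ i = conjugate (col P r) $ i" using c r i by simp
  qed (use c in simp)
qed

lemma entry_PQP:
  assumes Hb: "hermitian n Pb" and Ha: "hermitian n Pa" and Q: "Q \<in> carrier_mat n n"
    and r: "r < n" and s: "s < n"
  shows "(Pb * Q * Pa) $$ (r,s) = bil n Q (col Pb r) (col Pa s)"
proof -
  have cj: "Pb \<in> carrier_mat n n" and ci: "Pa \<in> carrier_mat n n" using Hb Ha by (auto simp: hermitian_def)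
  have "(Pb * Q * Pa) $$ (r,s) = (Pb * (Q * Pa)) $$ (r,s)" using cj ci Q by simp
  also have "\<dots> = row Pb r \<bullet> col (Q * Pa) s" using cj ci Q r s by simp
  also have "\<dots> = conjugate (col Pb r) \<bullet> (Q *\<^sub>v col Pa s)"
    using row_herm[OF Hb r] col_mult2[OF Q ci s] by simp
  also have "\<dots> = (\<Sum>t<n. cnj (col Pb r $ t) * (Q *\<^sub>v col Pa s) $ t)"
    using cj ci Q s r by (simp add: scalar_prod_def lessThan_atLeast0)
  also have "\<dots> = bil n Q (col Pb r) (col Pa s)" using ci Q s by (simp add: bil_mv)
  finally show ?thesis .
qed

lemma mult_msum_right:
  assumes M: "M \<in> carrier_mat n n" and fin: "finite I" and P: "\<And>k. k \<in> I \<Longrightarrow> P k \<in> carrier_mat n n"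
  shows "M * msum n P I = msum n (\<lambda>k. M * P k) I"
proof (rule eq_matI)
  fix r s assume rs: "r < dim_row (msum n (\<lambda>k. M * P k) I)" "s < dim_col (msum n (\<lambda>k. M * P k) I)"
  then have r: "r < n" and s: "s < n" by (auto simp: msum_def)
  have "(M * msum n P I) $$ (r,s) = (\<Sum>t<n. M$$(r,t) * (\<Sum>k\<in>I. P k $$ (t,s)))"
    using M r s by (simp add: msum_def scalar_prod_def lessThan_atLeast0)
  also have "\<dots> = (\<Sum>k\<in>I. \<Sum>t<n. M$$(r,t) * P k $$ (t,s))"
    by (simp add: sum_distrib_left sum.swap[of _ I])
  also have "\<dots> = (\<Sum>k\<in>I. (M * P k) $$ (r,s))"
  proof (rule sum.cong[OF refl])
    fix k assume "k \<in> I"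
    then have "P k \<in> carrier_mat n n" by (rule P)
    then show "(\<Sum>t<n. M$$(r,t) * P k $$ (t,s)) = (M * P k) $$ (r,s)"
      using M r s by (simp add: scalar_prod_def lessThan_atLeast0)
  qed
  also have "\<dots> = msum n (\<lambda>k. M * P k) I $$ (r,s)" using r s by (simp add: msum_def)
  finally show "(M * msum n P I) $$ (r,s) = msum n (\<lambda>k. M * P k) I $$ (r,s)" .
qed (insert M, auto simp: msum_def)

lemma mult_msum_left:
  assumes M: "M \<in> carrier_mat n n" and fin: "finite I" and P: "\<And>k. k \<in> I \<Longrightarrow> P k \<in> carrier_mat n n"
  shows "msum n P I * M = msum n (\<lambda>k. P k * M) I"
proof (rule eq_matI)
  fix r s assume rs: "r < dim_row (msum n (\<lambda>k. P k * M) I)" "s < dim_col (msum n (\<lambda>k. P k * M) I)"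
  then have r: "r < n" and s: "s < n" by (auto simp: msum_def)
  have "(msum n P I * M) $$ (r,s) = (\<Sum>t<n. (\<Sum>k\<in>I. P k $$ (r,t)) * M$$(t,s))"
    using M r s by (simp add: msum_def scalar_prod_def lessThan_atLeast0)
  also have "\<dots> = (\<Sum>k\<in>I. \<Sum>t<n. P k $$ (r,t) * M$$(t,s))"
    by (simp add: sum_distrib_right sum.swap[of _ I])
  also have "\<dots> = (\<Sum>k\<in>I. (P k * M) $$ (r,s))"
  proof (rule sum.cong[OF refl])
    fix k assume "k \<in> I"
    then have "P k \<in> carrier_mat n n" by (rule P)
    then show "(\<Sum>t<n. P k $$ (r,t) * M$$(t,s)) = (P k * M) $$ (r,s)"
      using M r s by (simp add: scalar_prod_def lessThan_atLeast0)
  qed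
  also have "\<dots> = msum n (\<lambda>k. P k * M) I $$ (r,s)" using r s by (simp add: msum_def)
  finally show "(msum n P I * M) $$ (r,s) = msum n (\<lambda>k. P k * M) I $$ (r,s)" .
qed (insert M, auto simp: msum_def)

lemma msum_single:
  assumes fin: "finite I" and i: "i \<in> I" and Z: "\<And>k. k \<in> I \<Longrightarrow> k \<noteq> i \<Longrightarrow> f k = 0\<^sub>m n n"
    and fi: "f i \<in> carrier_mat n n"
  shows "msum n f I = f i"
proof (rule eq_matI)
  fix r s assume "r < dim_row (f i)" "s < dim_col (f i)"
  then have r: "r < n" and s: "s < n" using fi by auto
  have "msum n f I $$ (r,s) = (\<Sum>k\<in>I. f k $$ (r,s))" using r s by (simp add: msum_def)
  also have "\<dots> = f i $$ (r,s) + (\<Sum>k\<in>I-{i}. f k $$ (r,s))" using fin i by (simp add: sum.remove)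
  also have "(\<Sum>k\<in>I-{i}. f k $$ (r,s)) = 0" using Z r s by (intro sum.neutral) auto
  finally show "msum n f I $$ (r,s) = f i $$ (r,s)" by simp
qed (insert fi, auto simp: msum_def)

lemma normalize_vec:
  fixes y :: "complex vec"
  assumes y: "y \<in> carrier_vec n" and nz: "y \<noteq> 0\<^sub>v n"
  shows "\<exists>k::real. k \<noteq> 0 \<and> (\<Sum>r<n. (of_real k \<cdot>\<^sub>v y)$r * cnj ((of_real k \<cdot>\<^sub>v y)$r)) = 1"
proof -
  define S where "S = (\<Sum>r<n. (cmod (y$r))^2)"
  have "(\<Sum>r<n. y$r * cnj (y$r)) = (\<Sum>r<n. of_real ((cmod (y$r))^2))"
    by (intro sum.cong refl) (rule complex_norm_square[symmetric])
  also have "\<dots> = of_real S" by (simp only: S_def of_real_sum)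
  finally have eqS: "(\<Sum>r<n. y$r * cnj (y$r)) = of_real S" .
  obtain r0 where r0: "r0 < n" "y$r0 \<noteq> 0" using y nz by (metis eq_vecI carrier_vecD index_zero_vec(1,2))
  have "0 < (cmod (y$r0))^2" using r0 by simp
  also have "(cmod (y$r0))^2 \<le> S" unfolding S_def using r0
    by (intro member_le_sum) auto
  finally have Sp: "0 < S" .
  define k where "k = 1 / sqrt S"
  have k0: "k \<noteq> 0" using Sp by (simp add: k_def)
  have "(\<Sum>r<n. (of_real k \<cdot>\<^sub>v y)$r * cnj ((of_real k \<cdot>\<^sub>v y)$r)) = of_real (k^2) * (\<Sum>r<n. y$r * cnj (y$r))"
    using y by (simp add: sum_distrib_left power2_eq_square algebra_simps)
  also have "\<dots> = of_real (k^2 * S)" by (simp add: eqS)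
  also have "k^2 * S = 1" using Sp by (simp add: k_def power_divide)
  finally have "(\<Sum>r<n. (of_real k \<cdot>\<^sub>v y)$r * cnj ((of_real k \<cdot>\<^sub>v y)$r)) = 1" by simp
  then show ?thesis using k0 by blast
qed



lemma disk_affine:
  fixes G :: "real \<Rightarrow> complex \<Rightarrow> real"
  assumes nonneg: "\<And>a c. indisk a c \<Longrightarrow> 0 \<le> G a c"
  and conv: "\<And>a1 c1 a2 c2 l. indisk a1 c1 \<Longrightarrow> indisk a2 c2 \<Longrightarrow> 0 \<le> l \<Longrightarrow> l \<le> 1 \<Longrightarrow>
       G (l*a1+(1-l)*a2) (of_real l*c1 + of_real(1-l)*c2) = l*G a1 c1 + (1-l)*G a2 c2"
  and zero: "G 0 0 = 0"
  and dk: "indisk a c"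
  shows "G a c = a * G 1 0"
proof -
  define G1 where "G1 = G 1 0"
  have d10: "indisk 1 0" "indisk 0 0" by (auto simp: indisk_def)
  have A: "G x 0 = x * G1" if "0 \<le> x" "x \<le> 1" for x
    using conv[OF d10(1) d10(2) that] zero by (simp add: G1_def)
  have negd: "indisk x (-y)" if "indisk x y" for x y using that by (simp add: indisk_def)
  have B: "G x y + G x (-y) = 2*x*G1" if "indisk x y" for x y
  proof -
    have "G ((1/2)*x+(1-1/2)*x) (of_real (1/2)*y + of_real(1-1/2)*(-y)) = (1/2)*G x y + (1-1/2)*G x (-y)"
      by (rule conv[OF that negd[OF that]]) auto
    moreover have "G ((1/2)*x+(1-1/2)*x) (of_real (1/2)*y + of_real(1-1/2)*(-y)) = G x 0" by simp
    moreover have "G x 0 = x*G1" using that A by (auto simp: indisk_def)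
    ultimately show ?thesis by simp
  qed
  have C: "G a c = G a (-c)"
  proof (cases "c = 0")
    case True then show ?thesis by simp
  next
    case False
    define D where "D = G a c - G a (-c)"
    have cpos: "cmod c > 0" using False by simp
    have "0 < (cmod c)^2" using cpos by simp
    then have "0 < a*(1-a)" using dk unfolding indisk_def by linarith
    then have "a \<noteq> 0" "a \<noteq> 1" by auto
    then have a01: "0 < a" "a < 1" using dk unfolding indisk_def by auto
    have cle: "(cmod c)^2 \<le> a*(1-a)" using dk by (simp add: indisk_def)
    have G1nn: "0 \<le> G1" using nonneg d10 by (simp add: G1_def)
    have bound: "D^2 \<le> 8*t*G1^2" if t0: "0 < t" and t1: "t \<le> 1/2" for t
    proof -
      define a' where "a' = t*a"
      have ta: "t*a \<le> t" using a01 t0 by (simp add: mult_left_le)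
      have a'0: "0 < a'" "a' \<le> 1/2"
        using t0 a01 apply (simp add: a'_def)
        using ta t1 unfolding a'_def by linarith
      define s where "s = sqrt (a'*(1-a'))/cmod c"
      have spos: "s > 0" using a'0 cpos by (simp add: s_def)
      have s2: "s^2 * (cmod c)^2 = a'*(1-a')" using a'0 cpos
        by (simp add: s_def power_divide)
      have "t^2 * (cmod c)^2 \<le> t^2 * (a*(1-a))" using cle by (simp add: mult_left_mono)
      also have "\<dots> \<le> a'*(1-a')"
      proof -
        have "a'*(1-a') - t^2*(a*(1-a)) = t*a*(1-t)" by (simp add: a'_def power2_eq_square algebra_simps)
        moreover have "0 \<le> t*a*(1-t)" using t0 t1 a01 by simp
        ultimately show ?thesis by linarith
      qed
      finally have "t^2 * (cmod c)^2 \<le> s^2 * (cmod c)^2" using s2 by simp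
      then have "t^2 \<le> s^2" using cpos by simp
      then have ts: "t \<le> s" using spos t0 by (simp add: power_mono_iff)
      define l where "l = (1 + t/s)/2"
      have l01: "0 \<le> l" "l \<le> 1" using ts spos t0 by (auto simp: l_def field_simps)
      have dR: "indisk a' (of_real s * c)" "indisk a' (-(of_real s * c))"
        using s2 a'0 by (auto simp: indisk_def norm_mult power_mult_distrib)
      have e1: "G (l*a'+(1-l)*a') (of_real l*(of_real s * c) + of_real(1-l)*(-(of_real s * c)))
          = l*G a' (of_real s * c) + (1-l)*G a' (-(of_real s * c))"
        by (rule conv[OF dR l01])
      have e2: "G (l*a'+(1-l)*a') (of_real l*(-(of_real s * c)) + of_real(1-l)*((of_real s * c)))
          = l*G a' (-(of_real s * c)) + (1-l)*G a' ((of_real s * c))"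
        by (rule conv[OF dR(2) dR(1) l01])
      have ct: "of_real l*(of_real s * c) + of_real(1-l)*(-(of_real s * c)) = of_real t * c"
      proof -
        have "of_real l*(of_real s * c) + of_real(1-l)*(-(of_real s * c)) = of_real ((2*l-1)*s) * c"
          by (simp add: algebra_simps)
        also have "(2*l-1)*s = t" using spos by (simp add: l_def field_simps)
        finally show ?thesis .
      qed
      have ct2: "of_real l*(-(of_real s * c)) + of_real(1-l)*((of_real s * c)) = - (of_real t * c)"
        using ct by (simp add: algebra_simps)
      have aa: "l*a'+(1-l)*a' = a'" by (simp add: algebra_simps)
      have e1': "G a' (of_real t * c) = l*G a' (of_real s * c) + (1-l)*G a' (-(of_real s * c))"
        using e1 ct aa by simp
      have e2': "G a' (-(of_real t * c)) = l*G a' (-(of_real s * c)) + (1-l)*G a' ((of_real s * c))"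
        using e2 ct2 aa by simp
      have t01: "0 \<le> t" "t \<le> 1" using t0 t1 by auto
      have f1: "G (t*a+(1-t)*0) (of_real t * c + of_real (1-t)*0) = t * G a c + (1-t)*G 0 0"
        by (rule conv[OF dk d10(2) t01])
      have f2: "G (t*a+(1-t)*0) (of_real t * (-c) + of_real (1-t)*0) = t * G a (-c) + (1-t)*G 0 0"
        by (rule conv[OF negd[OF dk] d10(2) t01])
      have f1': "G a' (of_real t * c) = t * G a c" using f1 zero by (simp add: a'_def)
      have f2': "G a' (-(of_real t * c)) = t * G a (-c)" using f2 zero by (simp add: a'_def)
      define GR where "GR = G a' (of_real s * c)"
      define GR' where "GR' = G a' (-(of_real s * c))"
      have GRn: "0 \<le> GR" "0 \<le> GR'" using nonneg dR by (auto simp: GR_def GR'_def)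
      have sumR: "GR + GR' = 2*a'*G1" using B[OF dR(1)] by (simp add: GR_def GR'_def)
      have "t * D = (2*l-1)*(GR - GR')" using e1' e2' f1' f2'
        by (simp add: D_def GR_def GR'_def algebra_simps)
      also have "2*l-1 = t/s" by (simp add: l_def field_simps)
      finally have "t*D = t/s*(GR-GR')" .
      then have E: "t*D = t*((GR-GR')/s)" by simp
      have "D = (GR - GR')/s" using E t0 by (metis mult_left_cancel order_less_irrefl)
      then have Ds: "D*s = GR - GR'" using spos by simp
      have "\<bar>D*s\<bar> \<le> 2*a'*G1" using Ds GRn sumR by linarith
      then have "\<bar>D*s\<bar>^2 \<le> (2*a'*G1)^2" by (intro power_mono) auto
      then have "(D*s)^2 \<le> (2*a'*G1)^2" by simp
      then have "(D*s)^2 * (cmod c)^2 \<le> (2*a'*G1)^2 * (cmod c)^2" by (intro mult_right_mono) auto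
      moreover have "(D*s)^2 * (cmod c)^2 = D^2 * (s^2*(cmod c)^2)" by (simp add: power_mult_distrib)
      moreover have "(2*a'*G1)^2 * (cmod c)^2 = 4*a'^2*G1^2*(cmod c)^2" by (simp add: power_mult_distrib)
      ultimately have "D^2 * (s^2*(cmod c)^2) \<le> 4*a'^2*G1^2*(cmod c)^2" by simp
      then have "D^2 * (a'*(1-a')) \<le> 4*a'^2*G1^2*(cmod c)^2" using s2 by simp
      moreover have "D^2 * (a'*(1-a')) = a' * (D^2*(1-a'))" by (simp add: algebra_simps)
      moreover have "4*a'^2*G1^2*(cmod c)^2 = a' * (4*a'*G1^2*(cmod c)^2)"
        by (simp add: power2_eq_square algebra_simps)
      ultimately have "a' * (D^2*(1-a')) \<le> a' * (4*a'*G1^2*(cmod c)^2)" by simp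
      then have X: "D^2*(1-a') \<le> 4*a'*G1^2*(cmod c)^2" using a'0 by simp
      have "a*(1-a) \<le> 1" using a01 by (intro mult_le_one) auto
      then have "(cmod c)^2 \<le> 1" using cle by linarith
      then have "4*a'*G1^2*(cmod c)^2 \<le> 4*a'*G1^2" using a'0
        by (intro mult_left_le) auto
      with X have Y: "D^2*(1-a') \<le> 4*a'*G1^2" by linarith
      have Z: "D^2 * (1/2) \<le> D^2 * (1-a')" using a'0 by (intro mult_left_mono) auto
      have "a' \<le> t" using ta by (simp add: a'_def)
      then have "4*a'*G1^2 \<le> 4*t*G1^2" by (intro mult_right_mono) auto
      with Y Z show ?thesis by linarith
    qed
    have "D = 0"
    proof (rule ccontr)
      assume "D \<noteq> 0"
      then have Dp: "D^2 > 0" by simp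
      define t where "t = min (1/2) (D^2/(16*G1^2+1))"
      have "0 \<le> 16*G1^2" by simp
      then have den: "16*G1^2+1 > 0" by linarith
      have "0 < D^2/(16*G1^2+1)" using Dp den by (rule divide_pos_pos)
      then have t00: "0 < t" unfolding t_def by simp
      have t01: "t \<le> 1/2" unfolding t_def by (rule min.cobounded1)
      note t0 = t00 t01
      have "D^2 \<le> 8*t*G1^2" by (rule bound[OF t0])
      also have "\<dots> \<le> 8*(D^2/(16*G1^2+1))*G1^2"
        by (intro mult_right_mono mult_left_mono) (auto simp: t_def)
      also have "\<dots> < D^2"
      proof -
        have "8*(D^2/(16*G1^2+1))*G1^2 = D^2 * (8*G1^2/(16*G1^2+1))" by simp
        moreover have "8*G1^2/(16*G1^2+1) < 1" using den by (simp add: divide_less_eq)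
        moreover have "D^2 * (8*G1^2/(16*G1^2+1)) < D^2 * 1"
          using \<open>8*G1^2/(16*G1^2+1) < 1\<close> Dp by (rule mult_strict_left_mono)
        ultimately show ?thesis by (simp add: mult.commute mult.left_commute)
      qed
      finally show False by simp
    qed
    then show ?thesis by (simp add: D_def)
  qed
  show ?thesis using B[OF dk] C by (simp add: G1_def)
qed




lemma zero_mat_vec: "v \<in> carrier_vec n \<Longrightarrow> 0\<^sub>m n n *\<^sub>v v = (0\<^sub>v n :: complex vec)"
  by (intro eq_vecI) auto

theorem theorem1:
  fixes n m :: nat
    and E Ed :: "complex mat \<Rightarrow> complex mat"
    and A B :: "complex mat"
    and I :: "'i set" and F :: "'f set"
    and a :: "'i \<Rightarrow> real" and Pr :: "'i \<Rightarrow> complex mat"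
    and b :: "'f \<Rightarrow> real" and Xi :: "'f \<Rightarrow> complex mat"
  assumes chan: "quantum_channel n m E"
    and adjE: "is_adjoint n m E Ed"
    and specA: "spectral_decomp n A I a Pr"
    and specB: "spectral_decomp m B F b Xi"
    and noncomm: "\<exists>i\<in>I. \<exists>f\<in>F. Pr i * Ed (Xi f) - Ed (Xi f) * Pr i \<noteq> 0\<^sub>m n n"
  shows "\<not> (\<exists>p :: 'i \<Rightarrow> 'f \<Rightarrow> complex mat \<Rightarrow> real.
      (\<forall>\<rho>. density n \<rho> \<longrightarrow> (\<forall>i\<in>I. \<forall>f\<in>F. 0 \<le> p i f \<rho>)) \<and>
      (\<forall>\<rho>. density n \<rho> \<longrightarrow>
          (\<forall>i\<in>I. complex_of_real (\<Sum>f\<in>F. p i f \<rho>) = tr (Pr i * \<rho>)) \<and>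
          (\<forall>f\<in>F. complex_of_real (\<Sum>i\<in>I. p i f \<rho>) = tr (Xi f * E \<rho>))) \<and>
      (\<forall>(K::nat) (w :: nat \<Rightarrow> real) (\<rho>s :: nat \<Rightarrow> complex mat).
          (\<forall>k<K. 0 \<le> w k \<and> density n (\<rho>s k)) \<and> (\<Sum>k<K. w k) = 1 \<longrightarrow>
          (\<forall>i\<in>I. \<forall>f\<in>F.
             p i f (msum n (\<lambda>k. complex_of_real (w k) \<cdot>\<^sub>m \<rho>s k) {..<K})
               = (\<Sum>k<K. w k * p i f (\<rho>s k)))))"
proof
  assume "\<exists>p :: 'i \<Rightarrow> 'f \<Rightarrow> complex mat \<Rightarrow> real.
      (\<forall>\<rho>. density n \<rho> \<longrightarrow> (\<forall>i\<in>I. \<forall>f\<in>F. 0 \<le> p i f \<rho>)) \<and>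
      (\<forall>\<rho>. density n \<rho> \<longrightarrow>
          (\<forall>i\<in>I. complex_of_real (\<Sum>f\<in>F. p i f \<rho>) = tr (Pr i * \<rho>)) \<and>
          (\<forall>f\<in>F. complex_of_real (\<Sum>i\<in>I. p i f \<rho>) = tr (Xi f * E \<rho>))) \<and>
      (\<forall>(K::nat) (w :: nat \<Rightarrow> real) (\<rho>s :: nat \<Rightarrow> complex mat).
          (\<forall>k<K. 0 \<le> w k \<and> density n (\<rho>s k)) \<and> (\<Sum>k<K. w k) = 1 \<longrightarrow>
          (\<forall>i\<in>I. \<forall>f\<in>F.
             p i f (msum n (\<lambda>k. complex_of_real (w k) \<cdot>\<^sub>m \<rho>s k) {..<K})
               = (\<Sum>k<K. w k * p i f (\<rho>s k))))"
  then obtain p :: "'i \<Rightarrow> 'f \<Rightarrow> complex mat \<Rightarrow> real" where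
    H1: "\<forall>\<rho>. density n \<rho> \<longrightarrow> (\<forall>i\<in>I. \<forall>f\<in>F. 0 \<le> p i f \<rho>)" and
    H2: "\<forall>\<rho>. density n \<rho> \<longrightarrow>
          (\<forall>i\<in>I. complex_of_real (\<Sum>f\<in>F. p i f \<rho>) = tr (Pr i * \<rho>)) \<and>
          (\<forall>f\<in>F. complex_of_real (\<Sum>i\<in>I. p i f \<rho>) = tr (Xi f * E \<rho>))" and
    H3: "\<forall>(K::nat) (w :: nat \<Rightarrow> real) (\<rho>s :: nat \<Rightarrow> complex mat).
          (\<forall>k<K. 0 \<le> w k \<and> density n (\<rho>s k)) \<and> (\<Sum>k<K. w k) = 1 \<longrightarrow>
          (\<forall>i\<in>I. \<forall>f\<in>F.
             p i f (msum n (\<lambda>k. complex_of_real (w k) \<cdot>\<^sub>m \<rho>s k) {..<K})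
               = (\<Sum>k<K. w k * p i f (\<rho>s k)))"
    by blast
  have nn: "\<And>\<rho> i f. density n \<rho> \<Longrightarrow> i\<in>I \<Longrightarrow> f\<in>F \<Longrightarrow> 0 \<le> p i f \<rho>" using H1 by blast
  have marg1: "\<And>\<rho> i. density n \<rho> \<Longrightarrow> i\<in>I \<Longrightarrow> complex_of_real (\<Sum>f\<in>F. p i f \<rho>) = tr (Pr i * \<rho>)"
    using H2 by blast
  have marg2: "\<And>\<rho> f. density n \<rho> \<Longrightarrow> f\<in>F \<Longrightarrow> complex_of_real (\<Sum>i\<in>I. p i f \<rho>) = tr (Xi f * E \<rho>)"
    using H2 by blast
  have cvx: "\<And>(K::nat) (w :: nat \<Rightarrow> real) (\<rho>s :: nat \<Rightarrow> complex mat) i f.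
          (\<forall>k<K. 0 \<le> w k \<and> density n (\<rho>s k)) \<Longrightarrow> (\<Sum>k<K. w k) = 1 \<Longrightarrow> i\<in>I \<Longrightarrow> f\<in>F \<Longrightarrow>
             p i f (msum n (\<lambda>k. complex_of_real (w k) \<cdot>\<^sub>m \<rho>s k) {..<K})
               = (\<Sum>k<K. w k * p i f (\<rho>s k))"
    using H3 by blast
  have finI: "finite I" and finF: "finite F" using specA specB by (auto simp: spectral_decomp_def)
  have PrH: "\<And>i. i \<in> I \<Longrightarrow> hermitian n (Pr i)" using specA by (auto simp: spectral_decomp_def projector_def)
  have PrC: "\<And>i. i \<in> I \<Longrightarrow> Pr i \<in> carrier_mat n n" using PrH by (auto simp: hermitian_def)
  have PrI: "\<And>i. i \<in> I \<Longrightarrow> Pr i * Pr i = Pr i" using specA by (auto simp: spectral_decomp_def projector_def)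
  have PrO: "\<And>i j. i \<in> I \<Longrightarrow> j \<in> I \<Longrightarrow> i \<noteq> j \<Longrightarrow> Pr i * Pr j = 0\<^sub>m n n"
    using specA by (auto simp: spectral_decomp_def)
  have PrS: "msum n Pr I = 1\<^sub>m n" using specA by (auto simp: spectral_decomp_def)
  have XiC: "\<And>f. f \<in> F \<Longrightarrow> Xi f \<in> carrier_mat m m"
    using specB by (auto simp: spectral_decomp_def projector_def hermitian_def)
  have adjC: "\<And>X. X \<in> carrier_mat m m \<Longrightarrow> Ed X \<in> carrier_mat n n" using adjE by (simp add: is_adjoint_def)
  have adjT: "\<And>X Y. X \<in> carrier_mat m m \<Longrightarrow> Y \<in> carrier_mat n n \<Longrightarrow> tr (X * E Y) = tr (Ed X * Y)"
    using adjE by (simp add: is_adjoint_def)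
  obtain i0 f0 where i0: "i0 \<in> I" and f0: "f0 \<in> F"
    and nc: "Pr i0 * Ed (Xi f0) - Ed (Xi f0) * Pr i0 \<noteq> 0\<^sub>m n n" using noncomm by blast
  define Q where "Q = Ed (Xi f0)"
  have QC: "Q \<in> carrier_mat n n" using adjC XiC f0 by (simp add: Q_def)

  have annihil: "\<And>k i u. k\<in>I \<Longrightarrow> i\<in>I \<Longrightarrow> k\<noteq>i \<Longrightarrow> u\<in>carrier_vec n \<Longrightarrow> Pr i *\<^sub>v u = u \<Longrightarrow> Pr k *\<^sub>v u = 0\<^sub>v n"
  proof -
    fix k i u assume k: "k\<in>I" and i: "i\<in>I" and ki: "k\<noteq>i" and u: "u\<in>carrier_vec n" and pu: "Pr i *\<^sub>v u = u"
    have "Pr k *\<^sub>v u = Pr k *\<^sub>v (Pr i *\<^sub>v u)" using pu by simp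
    also have "\<dots> = (Pr k * Pr i) *\<^sub>v u" using PrC[OF k] PrC[OF i] u by simp
    also have "\<dots> = 0\<^sub>v n" using PrO[OF k i ki] u by (simp add: zero_mat_vec)
    finally show "Pr k *\<^sub>v u = 0\<^sub>v n" .
  qed

  have zero_tr: "\<And>k f \<rho>. k\<in>I \<Longrightarrow> f\<in>F \<Longrightarrow> density n \<rho> \<Longrightarrow> tr (Pr k * \<rho>) = 0 \<Longrightarrow> p k f \<rho> = 0"
  proof -
    fix k f \<rho> assume k: "k\<in>I" and f: "f\<in>F" and d: "density n \<rho>" and t: "tr (Pr k * \<rho>) = 0"
    have "complex_of_real (\<Sum>f\<in>F. p k f \<rho>) = 0" using marg1[OF d k] t by simp
    then have "(\<Sum>f\<in>F. p k f \<rho>) = 0" by (simp only: of_real_eq_0_iff)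
    moreover have "(\<Sum>f\<in>F. p k f \<rho>) = 0 \<longleftrightarrow> (\<forall>f\<in>F. p k f \<rho> = 0)"
      by (rule sum_nonneg_eq_0_iff[OF finF]) (rule nn[OF d k])
    ultimately have "\<forall>f\<in>F. p k f \<rho> = 0" by blast
    then show "p k f \<rho> = 0" using f by blast
  qed

  have S1: "\<And>kk f u w a c. kk\<in>I \<Longrightarrow> f\<in>F \<Longrightarrow> ON n u w \<Longrightarrow> Pr kk *\<^sub>v w = 0\<^sub>v n \<Longrightarrow> indisk a c \<Longrightarrow>
      p kk f (Dm n u w a c) = a * p kk f (Dm n u w 1 0)"
  proof -
    fix kk f u w a c assume kk: "kk\<in>I" and f: "f\<in>F" and on: "ON n u w" and kw: "Pr kk *\<^sub>v w = 0\<^sub>v n"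
      and dk: "indisk a c"
    have wC: "w \<in> carrier_vec n" using on by (simp add: ON_def)
    show "p kk f (Dm n u w a c) = a * p kk f (Dm n u w 1 0)"
    proof (rule disk_affine[where G = "\<lambda>a c. p kk f (Dm n u w a c)", OF _ _ _ dk])
      fix a c assume "indisk a c"
      then show "0 \<le> p kk f (Dm n u w a c)" using nn[OF density_Dm[OF on] kk f] by blast
    next
      fix a1 a2 l :: real and c1 c2 :: complex assume d1: "indisk a1 c1" and d2: "indisk a2 c2" and l0: "0 \<le> l" and l1: "l \<le> 1"
      define wt where "wt = (\<lambda>k::nat. if k = 0 then l else 1-l)"
      define rs where "rs = (\<lambda>k::nat. if k = 0 then Dm n u w a1 c1 else Dm n u w a2 c2)"
      have pre: "\<forall>k<2. 0 \<le> wt k \<and> density n (rs k)"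
      proof (intro allI impI)
        fix k :: nat assume "k < 2"
        then show "0 \<le> wt k \<and> density n (rs k)"
          using l0 l1 density_Dm[OF on d1] density_Dm[OF on d2] by (auto simp: wt_def rs_def)
      qed
      have s1: "(\<Sum>k<2. wt k) = 1" by (simp add: wt_def numeral_2_eq_2)
      have "p kk f (msum n (\<lambda>k. complex_of_real (wt k) \<cdot>\<^sub>m rs k) {..<2}) = (\<Sum>k<2. wt k * p kk f (rs k))"
        by (rule cvx[OF pre s1 kk f])
      moreover have "msum n (\<lambda>k. complex_of_real (wt k) \<cdot>\<^sub>m rs k) {..<2}
          = Dm n u w (l*a1+(1-l)*a2) (of_real l * c1 + of_real (1-l) * c2)"
        unfolding wt_def rs_def by (rule msum_Dm)
      moreover have "(\<Sum>k<2. wt k * p kk f (rs k)) = l * p kk f (Dm n u w a1 c1) + (1-l) * p kk f (Dm n u w a2 c2)"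
        by (simp add: wt_def rs_def numeral_2_eq_2)
      ultimately show "p kk f (Dm n u w (l*a1+(1-l)*a2) (of_real l * c1 + of_real (1-l) * c2))
         = l * p kk f (Dm n u w a1 c1) + (1-l) * p kk f (Dm n u w a2 c2)" by simp
    next
      have d00: "indisk 0 0" by (simp add: indisk_def)
      have "tr (Pr kk * Dm n u w 0 0) = bil n (Pr kk) w w" using tr_Dm[OF PrC[OF kk]] by simp
      also have "\<dots> = 0" using bil_zero[OF PrC[OF kk] wC kw] .
      finally show "p kk f (Dm n u w 0 0) = 0" by (rule zero_tr[OF kk f density_Dm[OF on d00]])
    qed
  qed

  have S2: "\<And>i j u w. i\<in>I \<Longrightarrow> j\<in>I \<Longrightarrow> i\<noteq>j \<Longrightarrow> ON n u w \<Longrightarrow> Pr i *\<^sub>v u = u \<Longrightarrow> Pr j *\<^sub>v w = w \<Longrightarrow>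
     bil n Q w u = 0"
  proof -
    fix i j u w assume i: "i\<in>I" and j: "j\<in>I" and ij: "i\<noteq>j" and on: "ON n u w"
      and pu: "Pr i *\<^sub>v u = u" and pw: "Pr j *\<^sub>v w = w"
    have uC: "u \<in> carrier_vec n" and wC: "w \<in> carrier_vec n" using on by (auto simp: ON_def)
    have onwu: "ON n w u"
    proof -
      have h: "(\<Sum>r<n. w$r * cnj(u$r)) = cnj (\<Sum>r<n. u$r * cnj(w$r))" by (simp add: cnj_sum mult.commute)
      have h2: "(\<Sum>r<n. u$r * cnj(w$r)) = 0" using on by (simp add: ON_def)
      have "(\<Sum>r<n. w$r * cnj(u$r)) = 0" unfolding h h2 by simp
      then show ?thesis using on by (simp add: ON_def)
    qed
    have ku: "\<And>k. k\<in>I \<Longrightarrow> k\<noteq>i \<Longrightarrow> Pr k *\<^sub>v u = 0\<^sub>v n" using annihil[OF _ i _ uC pu] by blast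
    have kw: "\<And>k. k\<in>I \<Longrightarrow> k\<noteq>j \<Longrightarrow> Pr k *\<^sub>v w = 0\<^sub>v n" using annihil[OF _ j _ wC pw] by blast
    define X where "X = p i f0 (Dm n u w 1 0)"
    define Y where "Y = p j f0 (Dm n w u 1 0)"
    define x where "x = bil n Q w u"
    define y where "y = bil n Q u w"
    define Z where "Z = of_real (1/2) * bil n Q u u + of_real (1-1/2) * bil n Q w w"
    have main: "complex_of_real (1/2 * X + 1/2 * Y) = Z + (c * x + cnj c * y)" if dc: "indisk (1/2) c" for c
    proof -
      define D where "D = Dm n u w (1/2) c"
      have dens: "density n D" unfolding D_def by (rule density_Dm[OF on dc])
      have DC: "D \<in> carrier_mat n n" by (simp add: D_def)
      have swap: "Dm n w u (1/2) (cnj c) = D" unfolding D_def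
        by (rule eq_matI) (auto simp: Dm_def algebra_simps)
      have dc': "indisk (1/2) (cnj c)" using dc by (simp add: indisk_def)
      have pi: "p i f0 D = 1/2 * X" unfolding D_def X_def
        by (rule S1[OF i f0 on kw[OF i ij] dc])
      have pj: "p j f0 D = 1/2 * Y" unfolding swap[symmetric] Y_def
        by (rule S1[OF j f0 onwu ku[OF j ij[symmetric]] dc'])
      have pk: "p k f0 D = 0" if k: "k \<in> I" "k \<noteq> i" "k \<noteq> j" for k
      proof (rule zero_tr[OF k(1) f0 dens])
        have "bil n (Pr k) u u = 0" "bil n (Pr k) w w = 0" "bil n (Pr k) w u = 0" "bil n (Pr k) u w = 0"
          using bil_zero[OF PrC[OF k(1)] uC ku[OF k(1) k(2)]] bil_zero[OF PrC[OF k(1)] wC kw[OF k(1) k(3)]]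
          by auto
        then show "tr (Pr k * D) = 0" unfolding D_def tr_Dm[OF PrC[OF k(1)]] by simp
      qed
      have sumI: "(\<Sum>k\<in>I. p k f0 D) = p i f0 D + p j f0 D"
      proof -
        have "(\<Sum>k\<in>I. p k f0 D) = p i f0 D + (\<Sum>k\<in>I-{i}. p k f0 D)" using finI i by (simp add: sum.remove)
        also have "(\<Sum>k\<in>I-{i}. p k f0 D) = p j f0 D + (\<Sum>k\<in>I-{i}-{j}. p k f0 D)"
          using finI j ij by (intro sum.remove) auto
        also have "(\<Sum>k\<in>I-{i}-{j}. p k f0 D) = 0" using pk by (intro sum.neutral) auto
        finally show ?thesis by simp
      qed
      have "complex_of_real (1/2 * X + 1/2 * Y) = complex_of_real (\<Sum>k\<in>I. p k f0 D)"
        using sumI pi pj by simp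
      also have "\<dots> = tr (Xi f0 * E D)" by (rule marg2[OF dens f0])
      also have "\<dots> = tr (Q * D)" unfolding Q_def by (rule adjT[OF XiC[OF f0] DC])
      also have "\<dots> = Z + (c * x + cnj c * y)"
        unfolding D_def tr_Dm[OF QC] Z_def x_def y_def by (simp only: add.assoc)
      finally show ?thesis .
    qed
    have T: "c * x + cnj c * y = 0" if dc: "indisk (1/2) c" for c
    proof -
      have "indisk (1/2) 0" by (simp add: indisk_def)
      from main[OF this] main[OF dc] show ?thesis by simp
    qed
    have d1: "indisk (1/2) (1/2)" by (simp add: indisk_def norm_divide power2_eq_square)
    have d2: "indisk (1/2) (\<i>/2)" by (simp add: indisk_def norm_divide power2_eq_square)
    have e1: "x + y = 0" using T[OF d1] by (simp add: field_simps)
    have e2: "x - y = 0" using T[OF d2] by (simp add: field_simps)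
    from e1 e2 have "x = 0" by (simp add: algebra_simps)
    then show "bil n Q w u = 0" by (simp add: x_def)
  qed
  have S3: "\<And>i j y z. i\<in>I \<Longrightarrow> j\<in>I \<Longrightarrow> i\<noteq>j \<Longrightarrow> y \<in> carrier_vec n \<Longrightarrow> z \<in> carrier_vec n \<Longrightarrow>
     Pr i *\<^sub>v y = y \<Longrightarrow> Pr j *\<^sub>v z = z \<Longrightarrow> bil n Q z y = 0"
  proof -
    fix i j y z assume i: "i\<in>I" and j: "j\<in>I" and ij: "i\<noteq>j" and yC: "y \<in> carrier_vec n"
      and zC: "z \<in> carrier_vec n" and py: "Pr i *\<^sub>v y = y" and pz: "Pr j *\<^sub>v z = z"
    show "bil n Q z y = 0"
    proof (cases "y = 0\<^sub>v n \<or> z = 0\<^sub>v n")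
      case True
      then show ?thesis
      proof
        assume "y = 0\<^sub>v n"
        then show ?thesis using QC by (intro bil_zero) (auto simp: zero_mat_vec)
      next
        assume z0: "z = 0\<^sub>v n"
        show ?thesis unfolding bil_def by (intro sum.neutral ballI) (simp add: z0)
      qed
    next
      case False
      then have y0: "y \<noteq> 0\<^sub>v n" and z0: "z \<noteq> 0\<^sub>v n" by auto
      obtain ky where ky: "ky \<noteq> 0" "(\<Sum>r<n. (of_real ky \<cdot>\<^sub>v y)$r * cnj ((of_real ky \<cdot>\<^sub>v y)$r)) = 1"
        using normalize_vec[OF yC y0] by blast
      obtain kz where kz: "kz \<noteq> 0" "(\<Sum>r<n. (of_real kz \<cdot>\<^sub>v z)$r * cnj ((of_real kz \<cdot>\<^sub>v z)$r)) = 1"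
        using normalize_vec[OF zC z0] by blast
      define u where "u = (of_real ky \<cdot>\<^sub>v y :: complex vec)"
      define w where "w = (of_real kz \<cdot>\<^sub>v z :: complex vec)"
      have orth0: "(\<Sum>r<n. y$r * cnj (z$r)) = 0"
      proof -
        have "(\<Sum>r<n. y$r * cnj (z$r)) = (\<Sum>r<n. (Pr i *\<^sub>v y)$r * cnj (z$r))" using py by simp
        also have "\<dots> = (\<Sum>r<n. y$r * cnj ((Pr i *\<^sub>v z)$r))" by (rule herm_move[OF PrH[OF i] yC zC])
        also have "Pr i *\<^sub>v z = 0\<^sub>v n" by (rule annihil[OF i j ij zC pz])
        finally show ?thesis by simp
      qed
      have orth: "(\<Sum>r<n. u$r * cnj (w$r)) = 0"
      proof -
        have "(\<Sum>r<n. u$r * cnj (w$r)) = of_real (ky * kz) * (\<Sum>r<n. y$r * cnj (z$r))"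
          using yC zC by (simp add: u_def w_def sum_distrib_left algebra_simps)
        then show ?thesis using orth0 by simp
      qed
      have on: "ON n u w" using ky kz orth yC zC by (simp add: ON_def u_def w_def)
      have pu: "Pr i *\<^sub>v u = u" unfolding u_def using mult_mat_vec[OF PrC[OF i] yC] py by simp
      have pw: "Pr j *\<^sub>v w = w" unfolding w_def using mult_mat_vec[OF PrC[OF j] zC] pz by simp
      have "bil n Q w u = 0" by (rule S2[OF i j ij on pu pw])
      moreover have "bil n Q w u = of_real (kz * ky) * bil n Q z y"
        using yC zC by (simp add: bil_def u_def w_def sum_distrib_left algebra_simps)
      ultimately show ?thesis using ky kz by simp
    qed
  qed
  have S4: "\<And>i j. i\<in>I \<Longrightarrow> j\<in>I \<Longrightarrow> i\<noteq>j \<Longrightarrow> Pr j * Q * Pr i = 0\<^sub>m n n"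
  proof -
    fix i j assume i: "i\<in>I" and j: "j\<in>I" and ij: "i\<noteq>j"
    show "Pr j * Q * Pr i = 0\<^sub>m n n"
    proof (rule eq_matI)
      fix r s assume "r < dim_row (0\<^sub>m n n :: complex mat)" "s < dim_col (0\<^sub>m n n :: complex mat)"
      then have r: "r < n" and s: "s < n" by auto
      have cy: "Pr i *\<^sub>v col (Pr i) s = col (Pr i) s"
        using col_mult2[OF PrC[OF i] PrC[OF i] s] PrI[OF i] by simp
      have cz: "Pr j *\<^sub>v col (Pr j) r = col (Pr j) r"
        using col_mult2[OF PrC[OF j] PrC[OF j] r] PrI[OF j] by simp
      have "(Pr j * Q * Pr i) $$ (r,s) = bil n Q (col (Pr j) r) (col (Pr i) s)"
        by (rule entry_PQP[OF PrH[OF j] PrH[OF i] QC r s])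
      also have "\<dots> = 0"
        using S3[OF i j ij _ _ cy cz] PrC[OF i] PrC[OF j] r s by simp
      finally show "(Pr j * Q * Pr i) $$ (r,s) = 0\<^sub>m n n $$ (r,s)" using r s by simp
    qed (use PrC[OF i] PrC[OF j] QC in simp_all)
  qed
  have L: "Pr i0 * Q = Pr i0 * Q * Pr i0"
  proof -
    have "Pr i0 * Q = Pr i0 * Q * 1\<^sub>m n" using PrC[OF i0] QC by simp
    also have "\<dots> = msum n (\<lambda>k. Pr i0 * Q * Pr k) I" unfolding PrS[symmetric]
      using PrC[OF i0] QC PrC finI by (intro mult_msum_right) auto
    also have "\<dots> = Pr i0 * Q * Pr i0"
      using finI i0 S4 PrC[OF i0] QC by (intro msum_single) auto
    finally show ?thesis .
  qed
  have R: "Q * Pr i0 = Pr i0 * Q * Pr i0"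
  proof -
    have "Q * Pr i0 = 1\<^sub>m n * (Q * Pr i0)" using PrC[OF i0] QC by simp
    also have "\<dots> = msum n (\<lambda>k. Pr k * (Q * Pr i0)) I" unfolding PrS[symmetric]
      using PrC[OF i0] QC PrC finI by (intro mult_msum_left) auto
    also have "\<dots> = Pr i0 * (Q * Pr i0)"
    proof (rule msum_single[OF finI i0])
      fix k assume k: "k \<in> I" "k \<noteq> i0"
      have "Pr k * (Q * Pr i0) = Pr k * Q * Pr i0" using PrC[OF i0] PrC[OF k(1)] QC by simp
      then show "Pr k * (Q * Pr i0) = 0\<^sub>m n n" using S4[OF i0 k(1)] k by simp
    qed (use PrC[OF i0] QC in simp)
    also have "\<dots> = Pr i0 * Q * Pr i0" using PrC[OF i0] QC by simp
    finally show ?thesis .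
  qed
  define M where "M = Pr i0 * Q * Pr i0"
  have MC: "M \<in> carrier_mat n n" using PrC[OF i0] QC by (simp add: M_def)
  have L': "Pr i0 * Q = M" using L by (simp only: M_def)
  have R': "Q * Pr i0 = M" using R by (simp only: M_def)
  have "Pr i0 * Q - Q * Pr i0 = M - M" by (simp only: L' R')
  also have "\<dots> = 0\<^sub>m n n" using MC by (rule minus_r_inv_mat)
  finally have "Pr i0 * Q - Q * Pr i0 = 0\<^sub>m n n" .
  then show False using nc by (simp add: Q_def)
qed


end
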